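(* Let $m,n,u\in\mathbb{R}$ with $n\neq0$, and let $(G_2,g,J)$ be the three-dimensional Lorentzian Lie group described in the context. Write $\mathbb{V}_{RC}$ for the real vector space of left-invariant Ricci collineations $\xi=\lambda_1\overline{e}_1+\lambda_2\overline{e}_2+\lambda_3\overline{e}_3$ ($\lambda_i\in\mathbb{R}$ constants) associated to the Yano connection. Then $(G_2,g,J)$ admits a nonzero left-invariant Ricci collineation if and only if one of the following holds: (1) $m=0$; in this case $\xi$ is a left-invariant Ricci collineation iff $\lambda_1=0$ and $n\lambda_2=u\lambda_3$, and $\mathbb{V}_{RC}=\langle \frac{u}{n}\overline{e}_2+\overline{e}_3\rangle$; (2) $m\neq0$ and $u=\frac14 m$; in this case $\xi$ is a left-invariant Ricci collineation iff $\lambda_1=0$ and $\lambda_2=-\frac{nu}{n^2+2u^2}\lambda_3$, and $\mathbb{V}_{RC}=\langle -\frac{nu}{n^2+2u^2}\overline{e}_2+\overline{e}_3\rangle$.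
   Context: $G_2$ is a connected three-dimensional Lie group whose Lie algebra has a basis $\{\overline{e}_1,\overline{e}_2,\overline{e}_3\}$ (left-invariant vector fields) with $[\overline{e}_1,\overline{e}_2]=n\overline{e}_2-u\overline{e}_3$, $[\overline{e}_1,\overline{e}_3]=-u\overline{e}_2-n\overline{e}_3$, $[\overline{e}_2,\overline{e}_3]=m\overline{e}_1$, $n\neq0$. The metric $g$ is the left-invariant Lorentzian metric with $g(\overline{e}_1,\overline{e}_1)=g(\overline{e}_2,\overline{e}_2)=1$, $g(\overline{e}_3,\overline{e}_3)=-1$, $g(\overline{e}_i,\overline{e}_j)=0$ for $i\neq j$. $J$ is the left-invariant product structure with $J\overline{e}_1=\overline{e}_1$, $J\overline{e}_2=\overline{e}_2$, $J\overline{e}_3=-\overline{e}_3$. With $\nabla^{LC}$ the Levi-Civita connection of $g$, the Yano connection is $\nabla^{*}_XY=\nabla^{LC}_XY-\frac12(\nabla^{LC}_YJ)JX-\frac14[(\nabla^{LC}_XJ)JY-(\nabla^{LC}_{JX}J)Y]$; its curvature is $R^{*}(X,Y)Z=\nabla^{*}_X\nabla^{*}_YZ-\nabla^{*}_Y\nabla^{*}_XZ-\nabla^{*}_{[X,Y]}Z$; its Ricci tensor is $\mathrm{Ric}^{*}(X,Y)=-g(R^{*}(X,\overline{e}_1)Y,\overline{e}_1)-g(R^{*}(X,\overline{e}_2)Y,\overline{e}_2)+g(R^{*}(X,\overline{e}_3)Y,\overline{e}_3)$; and $\overline{\mathrm{Ric}^{*}}(X,Y)=\frac12(\mathrm{Ric}^{*}(X,Y)+\mathrm{Ric}^{*}(Y,X))$.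 For a left-invariant vector field $\xi$, $(\mathrm{L}_{\xi}\overline{\mathrm{Ric}^{*}})(X,Y)=\xi(\overline{\mathrm{Ric}^{*}}(X,Y))-\overline{\mathrm{Ric}^{*}}([\xi,X],Y)-\overline{\mathrm{Ric}^{*}}(X,[\xi,Y])$; $\xi$ is a left-invariant Ricci collineation if $\mathrm{L}_{\xi}\overline{\mathrm{Ric}^{*}}=0$. *)

theory Defs
  imports "HOL-Analysis.Analysis"
begin

text \<open>Left-invariant vector fields on the Lie group G_2 are identified with their
  constant coefficient vectors in real^3 with respect to the left-invariant frame
  e_1, e_2, e_3 (indices 1, 2, 3 of type 3).\<close>

definition frame :: "3 \<Rightarrow> real^3" where
  "frame k = axis k 1"

definition br_frame :: "real \<Rightarrow> real \<Rightarrow> real \<Rightarrow> 3 \<Rightarrow> 3 \<Rightarrow> real^3" where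
  "br_frame m n u i j =
     (if i = 1 \<and> j = 2 then vector [0, n, -u]
      else if i = 2 \<and> j = 1 then vector [0, -n, u]
      else if i = 1 \<and> j = 3 then vector [0, -u, -n]
      else if i = 3 \<and> j = 1 then vector [0, u, n]
      else if i = 2 \<and> j = 3 then vector [m, 0, 0]
      else if i = 3 \<and> j = 2 then vector [-m, 0, 0]
      else 0)"

definition lie :: "real \<Rightarrow> real \<Rightarrow> real \<Rightarrow> real^3 \<Rightarrow> real^3 \<Rightarrow> real^3" where
  "lie m n u X Y = (\<Sum>i\<in>UNIV. \<Sum>j\<in>UNIV. (X$i * Y$j) *\<^sub>R br_frame m n u i j)"

definition sgn3 :: "3 \<Rightarrow> real" where
  "sgn3 i = (if i = 3 then -1 else 1)"

definition gmet :: "real^3 \<Rightarrow> real^3 \<Rightarrow> real" where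
  "gmet X Y = (\<Sum>i\<in>UNIV. sgn3 i * X$i * Y$i)"

definition Jstr :: "real^3 \<Rightarrow> real^3" where
  "Jstr X = (\<chi> i. sgn3 i * X$i)"

text \<open>Levi-Civita connection on left-invariant fields, given by the Koszul formula
  2 g(nabla_X Y, Z) = g([X,Y],Z) - g([Y,Z],X) + g([Z,X],Y) (metric coefficients constant).\<close>
definition LC :: "real \<Rightarrow> real \<Rightarrow> real \<Rightarrow> real^3 \<Rightarrow> real^3 \<Rightarrow> real^3" where
  "LC m n u X Y = (\<Sum>k\<in>UNIV. (sgn3 k * (1/2) *
      (gmet (lie m n u X Y) (frame k) - gmet (lie m n u Y (frame k)) X
       + gmet (lie m n u (frame k) X) Y)) *\<^sub>R frame k)"

definition nablaJ :: "real \<Rightarrow> real \<Rightarrow> real \<Rightarrow> real^3 \<Rightarrow> real^3 \<Rightarrow> real^3" where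
  "nablaJ m n u X Y = LC m n u X (Jstr Y) - Jstr (LC m n u X Y)"

definition yano :: "real \<Rightarrow> real \<Rightarrow> real \<Rightarrow> real^3 \<Rightarrow> real^3 \<Rightarrow> real^3" where
  "yano m n u X Y = LC m n u X Y - (1/2) *\<^sub>R nablaJ m n u Y (Jstr X)
     - (1/4) *\<^sub>R (nablaJ m n u X (Jstr Y) - nablaJ m n u (Jstr X) Y)"

definition curv :: "real \<Rightarrow> real \<Rightarrow> real \<Rightarrow> real^3 \<Rightarrow> real^3 \<Rightarrow> real^3 \<Rightarrow> real^3" where
  "curv m n u X Y Z = yano m n u X (yano m n u Y Z) - yano m n u Y (yano m n u X Z)
     - yano m n u (lie m n u X Y) Z"

definition ric :: "real \<Rightarrow> real \<Rightarrow> real \<Rightarrow> real^3 \<Rightarrow> real^3 \<Rightarrow> real" where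
  "ric m n u X Y = - gmet (curv m n u X (frame 1) Y) (frame 1)
     - gmet (curv m n u X (frame 2) Y) (frame 2)
     + gmet (curv m n u X (frame 3) Y) (frame 3)"

definition ric_sym :: "real \<Rightarrow> real \<Rightarrow> real \<Rightarrow> real^3 \<Rightarrow> real^3 \<Rightarrow> real" where
  "ric_sym m n u X Y = (1/2) * (ric m n u X Y + ric m n u Y X)"

text \<open>Lie derivative of the symmetrized Ricci tensor along a left-invariant xi, evaluated
  on left-invariant X, Y.  The term xi(Ric(X,Y)) vanishes since Ric(X,Y) is constant.\<close>
definition lie_deriv_ric :: "real \<Rightarrow> real \<Rightarrow> real \<Rightarrow> real^3 \<Rightarrow> real^3 \<Rightarrow> real^3 \<Rightarrow> real" where
  "lie_deriv_ric m n u xi X Y =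
     0 - ric_sym m n u (lie m n u xi X) Y - ric_sym m n u X (lie m n u xi Y)"

definition ricci_collineation :: "real \<Rightarrow> real \<Rightarrow> real \<Rightarrow> real^3 \<Rightarrow> bool" where
  "ricci_collineation m n u xi \<longleftrightarrow> (\<forall>X Y. lie_deriv_ric m n u xi X Y = 0)"

end

theory Submission
  imports Defs
begin

lemma d3: "(1::3) \<noteq> 2" "(1::3) \<noteq> 3" "(2::3) \<noteq> 3" "(2::3) \<noteq> 1" "(3::3) \<noteq> 1" "(3::3) \<noteq> 2"
  by simp_all

lemma lie_c:
  "lie m n u X Y $ 1 = m * X$2 * Y$3 - m * X$3 * Y$2"
  "lie m n u X Y $ 2 = n * X$1 * Y$2 - u * X$1 * Y$3 - n * X$2 * Y$1 + u * X$3 * Y$1"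
  "lie m n u X Y $ 3 = - u * X$1 * Y$2 - n * X$1 * Y$3 + u * X$2 * Y$1 + n * X$3 * Y$1"
  by (simp_all add: lie_def br_frame_def sum_3 d3 algebra_simps)

lemma frame_c: "frame 1 = vector [1,0,0]" "frame 2 = vector [0,1,0]" "frame 3 = vector [0,0,1]"
  by (simp_all add: frame_def vec_eq_iff forall_3 axis_def d3)

lemma gmet_e: "gmet X Y = X$1*Y$1 + X$2*Y$2 - X$3*Y$3"
  by (simp add: gmet_def sum_3 sgn3_def d3)

lemma J_c: "Jstr X $ 1 = X$1" "Jstr X $ 2 = X$2" "Jstr X $ 3 = - X$3"
  by (simp_all add: Jstr_def sgn3_def d3)

lemma LC_c:
  "LC m n u X Y $ 1 = 1/2*m*X$2*Y$3 - 1/2*m*X$3*Y$2 + n*X$2*Y$2 + n*X$3*Y$3"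
  "LC m n u X Y $ 2 = - u*X$1*Y$3 - n*X$2*Y$1 + 1/2*m*X$1*Y$3 + 1/2*m*X$3*Y$1"
  "LC m n u X Y $ 3 = - u*X$1*Y$2 + n*X$3*Y$1 + 1/2*m*X$1*Y$2 + 1/2*m*X$2*Y$1"
  by (simp_all add: LC_def sum_3 sgn3_def d3 gmet_e lie_c frame_c algebra_simps)

lemma yano_c:
  "yano m n u X Y $ 1 = - m*X$3*Y$2 + n*X$2*Y$2"
  "yano m n u X Y $ 2 = - n*X$2*Y$1 + u*X$3*Y$1"
  "yano m n u X Y $ 3 = - u*X$1*Y$2 + u*X$2*Y$1 - n*X$1*Y$3"
  by (simp_all add: yano_def nablaJ_def LC_c J_c algebra_simps)

lemma ric_sym_e: "ric_sym m n u X Y =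
   - (n^2+u^2) * X$1*Y$1 - (m*u+n^2)*X$2*Y$2 - 1/2*m*n*(X$2*Y$3 + X$3*Y$2)"
  by (simp add: ric_sym_def ric_def curv_def gmet_e yano_c lie_c frame_c algebra_simps power2_eq_square)


lemma ld_e: "lie_deriv_ric m n u xi X Y =
   X$1*Y$2 * (-1/2*m*n*u*xi$2 - n^3*xi$2 + n^2*u*xi$3 - 1/2*m*n^2*xi$3)
 + X$2*Y$1 * (-1/2*m*n*u*xi$2 - n^3*xi$2 + n^2*u*xi$3 - 1/2*m*n^2*xi$3)
 + X$1*Y$3 * (m*(1/2*n^2*xi$2 + 1/2*n*u*xi$3 + u^2*xi$2))
 + X$3*Y$1 * (m*(1/2*n^2*xi$2 + 1/2*n*u*xi$3 + u^2*xi$2))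
 + X$2*Y$2 * (m*n*u*xi$1 + 2*n^3*xi$1)
 + (X$2*Y$3 + X$3*Y$2) * (-m*u^2*xi$1 - n^2*u*xi$1)
 + X$3*Y$3 * (- m*n*u*xi$1)"
  by (simp add: lie_deriv_ric_def ric_sym_e lie_c algebra_simps power2_eq_square power3_eq_cube)

lemma fr_c: "frame 1 $ 1 = 1" "frame 1 $ 2 = 0" "frame 1 $ 3 = 0"
  "frame 2 $ 1 = 0" "frame 2 $ 2 = 1" "frame 2 $ 3 = 0"
  "frame 3 $ 1 = 0" "frame 3 $ 2 = 0" "frame 3 $ 3 = 1"
  by (simp_all add: frame_c)

lemma rc_iff: "ricci_collineation m n u xi \<longleftrightarrow>
   (-1/2*m*n*u*xi$2 - n^3*xi$2 + n^2*u*xi$3 - 1/2*m*n^2*xi$3 = 0)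
 \<and> (m*(1/2*n^2*xi$2 + 1/2*n*u*xi$3 + u^2*xi$2) = 0)
 \<and> (m*n*u*xi$1 + 2*n^3*xi$1 = 0)
 \<and> (-m*u^2*xi$1 - n^2*u*xi$1 = 0)
 \<and> (- m*n*u*xi$1 = 0)"
proof
  assume h: "ricci_collineation m n u xi"
  have "lie_deriv_ric m n u xi (frame i) (frame j) = 0" for i j
    using h unfolding ricci_collineation_def by blast
  from this[of 1 2] this[of 1 3] this[of 2 2] this[of 2 3] this[of 3 3] show "(-1/2*m*n*u*xi$2 - n^3*xi$2 + n^2*u*xi$3 - 1/2*m*n^2*xi$3 = 0)
 \<and> (m*(1/2*n^2*xi$2 + 1/2*n*u*xi$3 + u^2*xi$2) = 0)
 \<and> (m*n*u*xi$1 + 2*n^3*xi$1 = 0)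
 \<and> (-m*u^2*xi$1 - n^2*u*xi$1 = 0)
 \<and> (- m*n*u*xi$1 = 0)"
    by (simp add: ld_e fr_c)
next
  assume h: "(-1/2*m*n*u*xi$2 - n^3*xi$2 + n^2*u*xi$3 - 1/2*m*n^2*xi$3 = 0)
 \<and> (m*(1/2*n^2*xi$2 + 1/2*n*u*xi$3 + u^2*xi$2) = 0)
 \<and> (m*n*u*xi$1 + 2*n^3*xi$1 = 0)
 \<and> (-m*u^2*xi$1 - n^2*u*xi$1 = 0)
 \<and> (- m*n*u*xi$1 = 0)"
  then have e0: "-1/2*m*n*u*xi$2 - n^3*xi$2 + n^2*u*xi$3 - 1/2*m*n^2*xi$3 = 0" and e1: "m*(1/2*n^2*xi$2 + 1/2*n*u*xi$3 + u^2*xi$2) = 0" and e2: "m*n*u*xi$1 + 2*n^3*xi$1 = 0" and e3: "-m*u^2*xi$1 - n^2*u*xi$1 = 0" and e4: "- m*n*u*xi$1 = 0" by blast+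
  show "ricci_collineation m n u xi"
    unfolding ricci_collineation_def ld_e by (simp only: e0 e1 e2 e3 e4 mult_zero_right add_0_right add_0 simp_thms)
qed


lemma caseA:
  assumes n: "n \<noteq> 0"
  shows "ricci_collineation 0 n u xi \<longleftrightarrow> xi$1 = 0 \<and> n * xi$2 = u * xi$3"
proof -
  have "(n^2*u*xi$3 - n^3*xi$2 = 0) \<longleftrightarrow> n * xi$2 = u * xi$3"
  proof -
    have "n^2*u*xi$3 - n^3*xi$2 = (-(n^2)) * (n * xi$2 - u * xi$3)"
      by (simp add: algebra_simps power2_eq_square power3_eq_cube)
    then show ?thesis using n by simp
  qed
  then show ?thesis unfolding rc_iff using n by auto
qed

lemma caseB:
  assumes n: "n \<noteq> 0" and m: "m \<noteq> 0" and u: "u = m / 4"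
  shows "ricci_collineation m n u xi \<longleftrightarrow>
                 xi$1 = 0 \<and> xi$2 = - (n * u / (n^2 + 2 * u^2)) * xi$3"
proof -
  have mu: "m = 4 * u" using u by simp
  have pos: "n^2 + 2 * u^2 > 0" using n by (simp add: add_pos_nonneg)
  have k: "xi$2 = - (n * u / (n^2 + 2 * u^2)) * xi$3 \<longleftrightarrow> xi$2 * (n^2 + 2*u^2) + n*u*xi$3 = 0"
    using pos by (auto simp: field_simps)
  have e1: "-1/2*m*n*u*xi$2 - n^3*xi$2 + n^2*u*xi$3 - 1/2*m*n^2*xi$3
        = - n * (xi$2 * (n^2 + 2*u^2) + n*u*xi$3)"
    unfolding mu by (simp add: algebra_simps power2_eq_square power3_eq_cube)
  have e2: "m*(1/2*n^2*xi$2 + 1/2*n*u*xi$3 + u^2*xi$2) = m/2 * (xi$2 * (n^2 + 2*u^2) + n*u*xi$3)"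
    by (simp add: algebra_simps)
  have e3: "m*n*u*xi$1 + 2*n^3*xi$1 = 2 * n * (n^2 + 2*u^2) * xi$1"
    unfolding mu by (simp add: algebra_simps power2_eq_square power3_eq_cube)
  have e4: "-m*u^2*xi$1 - n^2*u*xi$1 = - u * (m * u + n^2) * xi$1"
    by (simp add: algebra_simps power2_eq_square)
  show ?thesis unfolding rc_iff e1 e2 e3 e4 k using n m pos by auto
qed

lemma caseC:
  assumes n: "n \<noteq> 0" and m: "m \<noteq> 0" and u: "u \<noteq> m / 4"
    and rc: "ricci_collineation m n u xi"
  shows "xi = 0"
proof -
  have pos: "n^2 + 2 * u^2 > 0" using n by (simp add: add_pos_nonneg)
  have pos2: "u^2 + n^2 > 0" using n by (simp add: add_nonneg_pos)
  have c1: "-1/2*m*n*u*xi$2 - n^3*xi$2 + n^2*u*xi$3 - 1/2*m*n^2*xi$3 = 0"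
   and c2: "m*(1/2*n^2*xi$2 + 1/2*n*u*xi$3 + u^2*xi$2) = 0"
   and c3: "m*n*u*xi$1 + 2*n^3*xi$1 = 0"
   and c5: "- m*n*u*xi$1 = 0" using rc unfolding rc_iff by blast+
  have a: "xi$1 = 0"
  proof (cases "u = 0")
    case True then show ?thesis using c3 n by simp
  next
    case False then show ?thesis using c5 n m by simp
  qed
  have b: "xi$2 * (n^2 + 2*u^2) = - n*u*xi$3"
  proof -
    have "m/2 * (xi$2 * (n^2 + 2*u^2) + n*u*xi$3) = 0" using c2 by (simp add: algebra_simps)
    then have "xi$2 * (n^2 + 2*u^2) + n*u*xi$3 = 0" using m by simp
    then show ?thesis by (simp add: algebra_simps)
  qed
  have "(n^2 + 2*u^2) * (-1/2*m*n*u*xi$2 - n^3*xi$2 + n^2*u*xi$3 - 1/2*m*n^2*xi$3)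
      = - (m*u/2 + n^2) * n * (xi$2 * (n^2 + 2*u^2)) + (n^2 + 2*u^2) * (n^2*u*xi$3 - 1/2*m*n^2*xi$3)"
    by (simp add: algebra_simps power2_eq_square power3_eq_cube)
  also have "\<dots> = n^2 * xi$3 * (u^2 + n^2) * (4 * u - m) / 2"
    unfolding b by (simp add: algebra_simps power2_eq_square power3_eq_cube)
  finally have "n^2 * xi$3 * (u^2 + n^2) * (4 * u - m) / 2 = 0" by (metis c1 mult_zero_right)
  moreover have "4 * u - m \<noteq> 0" using u by simp
  ultimately have c: "xi$3 = 0" using n pos2 by simp
  have "xi$2 = 0" using b c pos by simp
  then show ?thesis using a c by (simp add: vec_eq_iff forall_3)
qed


lemma span_line: "{xi::real^3. xi$1 = 0 \<and> xi$2 = k * xi$3} = span {k *\<^sub>R frame 2 + frame 3}"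
proof -
  have "{xi::real^3. xi$1 = 0 \<and> xi$2 = k * xi$3} = range (\<lambda>t. t *\<^sub>R (k *\<^sub>R frame 2 + frame 3))"
  proof (intro set_eqI iffI)
    fix xi :: "real^3" assume "xi \<in> {xi::real^3. xi$1 = 0 \<and> xi$2 = k * xi$3}"
    then have "xi = (xi$3) *\<^sub>R (k *\<^sub>R frame 2 + frame 3)"
      by (simp add: vec_eq_iff forall_3 fr_c)
    then show "xi \<in> range (\<lambda>t. t *\<^sub>R (k *\<^sub>R frame 2 + frame 3))" by blast
  next
    fix xi :: "real^3" assume "xi \<in> range (\<lambda>t. t *\<^sub>R (k *\<^sub>R frame 2 + frame 3))"
    then show "xi \<in> {xi::real^3. xi$1 = 0 \<and> xi$2 = k * xi$3}"
      by (auto simp: fr_c)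
  qed
  then show ?thesis by (simp add: span_singleton)
qed

theorem theorem3p6:
  fixes m n u :: real
  assumes "n \<noteq> 0"
  shows "((\<exists>xi. xi \<noteq> 0 \<and> ricci_collineation m n u xi) \<longleftrightarrow>
            (m = 0 \<or> (m \<noteq> 0 \<and> u = m / 4)))
     \<and> (m = 0 \<longrightarrow>
          (\<forall>xi. ricci_collineation m n u xi \<longleftrightarrow> xi$1 = 0 \<and> n * xi$2 = u * xi$3)
          \<and> {xi. ricci_collineation m n u xi} = span {(u / n) *\<^sub>R frame 2 + frame 3})
     \<and> (m \<noteq> 0 \<and> u = m / 4 \<longrightarrow>
          (\<forall>xi. ricci_collineation m n u xi \<longleftrightarrow>
                 xi$1 = 0 \<and> xi$2 = - (n * u / (n^2 + 2 * u^2)) * xi$3)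
          \<and> {xi. ricci_collineation m n u xi} =
               span {(- (n * u / (n^2 + 2 * u^2))) *\<^sub>R frame 2 + frame 3})"
proof (intro conjI impI)
  note n = assms
  have A: "m = 0 \<Longrightarrow> ricci_collineation m n u xi \<longleftrightarrow> xi$1 = 0 \<and> xi$2 = (u/n) * xi$3" for xi
    using caseA[OF n, of u xi] n by (auto simp: field_simps)
  have B: "m \<noteq> 0 \<Longrightarrow> u = m / 4 \<Longrightarrow> ricci_collineation m n u xi \<longleftrightarrow>
                 xi$1 = 0 \<and> xi$2 = - (n * u / (n^2 + 2 * u^2)) * xi$3" for xi
    using caseB[OF n] by blast
  have nz: "(k *\<^sub>R frame 2 + frame 3 :: real^3) \<noteq> 0" for k
    by (simp add: vec_eq_iff forall_3 fr_c)
  show "(\<exists>xi. xi \<noteq> 0 \<and> ricci_collineation m n u xi) \<longleftrightarrow> (m = 0 \<or> (m \<noteq> 0 \<and> u = m / 4))"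
  proof
    assume "\<exists>xi. xi \<noteq> 0 \<and> ricci_collineation m n u xi"
    then show "m = 0 \<or> (m \<noteq> 0 \<and> u = m / 4)" using caseC[OF n] by blast
  next
    assume h: "m = 0 \<or> (m \<noteq> 0 \<and> u = m / 4)"
    show "\<exists>xi. xi \<noteq> 0 \<and> ricci_collineation m n u xi"
    proof (cases "m = 0")
      case True
      show ?thesis
        by (rule exI[of _ "(u/n) *\<^sub>R frame 2 + frame 3"]) (rule conjI[OF nz], simp add: A[OF True] fr_c)
    next
      case False
      with h have "u = m/4" by blast
      show ?thesis
        by (rule exI[of _ "(- (n * u / (n^2 + 2 * u^2))) *\<^sub>R frame 2 + frame 3"])
           (rule conjI[OF nz], simp add: B[OF False \<open>u = m/4\<close>] fr_c)
    qed
  qed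
  show "\<forall>xi. ricci_collineation m n u xi \<longleftrightarrow> xi$1 = 0 \<and> n * xi$2 = u * xi$3" if "m = 0"
    using caseA[OF n] that by blast
  show "{xi. ricci_collineation m n u xi} = span {(u / n) *\<^sub>R frame 2 + frame 3}" if "m = 0"
    using A[OF that] span_line[of "u/n"] by simp
  show "\<forall>xi. ricci_collineation m n u xi \<longleftrightarrow>
                 xi$1 = 0 \<and> xi$2 = - (n * u / (n^2 + 2 * u^2)) * xi$3" if "m \<noteq> 0 \<and> u = m / 4"
    using B that by blast
  show "{xi. ricci_collineation m n u xi} =
               span {(- (n * u / (n^2 + 2 * u^2))) *\<^sub>R frame 2 + frame 3}" if "m \<noteq> 0 \<and> u = m / 4"
  proof -
    have "{xi. ricci_collineation m n u xi} = {xi::real^3. xi$1 = 0 \<and> xi$2 = (- (n * u / (n^2 + 2 * u^2))) * xi$3}"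
      using B that by blast
    then show ?thesis using span_line by metis
  qed
qed

end
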